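(* Let $R$ and $S$ be commutative rings with identity, $f:R\to S$ a ring homomorphism, and $J$ a nonzero proper ideal of $S$. (1) If $J\subseteq\operatorname{Nil}(S)$, then $R\bowtie^f J$ is compactly packed if and only if $R$ is compactly packed. (2) For any $R$-module $M$, the trivial extension $R\ltimes M$ is compactly packed if and only if $R$ is compactly packed.
   Context: $R\bowtie^f J:=\{(r,f(r)+j)\mid r\in R,\ j\in J\}$, a subring of $R\times S$. $\operatorname{Nil}(S)$ is the nilradical of $S$. The trivial extension $R\ltimes M$ is the ring $R\oplus M$ with multiplication $(r,m)(r',m')=(rr',rm'+r'm)$. A commutative ring $A$ is compactly packed if whenever an ideal $I$ of $A$ is contained in the union of a family $\{\mathfrak{p}_i\}_i$ of prime ideals of $A$, then $I\subseteq\mathfrak{p}_i$ for some $i$. *)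

theory Defs
  imports "HOL-Algebra.Module" "HOL-Algebra.Ideal"
begin

definition compactly_packed :: "('a, 'm) ring_scheme \<Rightarrow> bool" where
  "compactly_packed A \<longleftrightarrow>
     (\<forall>I P. ideal I A \<and> (\<forall>p\<in>P. primeideal p A) \<and> I \<subseteq> \<Union>P
        \<longrightarrow> (\<exists>p\<in>P. I \<subseteq> p))"

definition nilradical :: "('a, 'm) ring_scheme \<Rightarrow> 'a set" where
  "nilradical S = {x \<in> carrier S. \<exists>n::nat. x [^]\<^bsub>S\<^esub> n = \<zero>\<^bsub>S\<^esub>}"

definition amalgamation ::
  "('a, 'm) ring_scheme \<Rightarrow> ('b, 'n) ring_scheme \<Rightarrow> ('a \<Rightarrow> 'b) \<Rightarrow> 'b set \<Rightarrow> ('a \<times> 'b) ring" where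
  "amalgamation R S f J =
    \<lparr> carrier = {(r, f r \<oplus>\<^bsub>S\<^esub> j) | r j. r \<in> carrier R \<and> j \<in> J},
      monoid.mult = (\<lambda>(r, s) (r', s'). (r \<otimes>\<^bsub>R\<^esub> r', s \<otimes>\<^bsub>S\<^esub> s')),
      one = (\<one>\<^bsub>R\<^esub>, \<one>\<^bsub>S\<^esub>),
      zero = (\<zero>\<^bsub>R\<^esub>, \<zero>\<^bsub>S\<^esub>),
      add = (\<lambda>(r, s) (r', s'). (r \<oplus>\<^bsub>R\<^esub> r', s \<oplus>\<^bsub>S\<^esub> s')) \<rparr>"

definition trivial_extension ::
  "('a, 'm) ring_scheme \<Rightarrow> ('a, 'b, 'n) module_scheme \<Rightarrow> ('a \<times> 'b) ring" where
  "trivial_extension R M =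
    \<lparr> carrier = carrier R \<times> carrier M,
      monoid.mult = (\<lambda>(r, m) (r', m'). (r \<otimes>\<^bsub>R\<^esub> r', (r \<odot>\<^bsub>M\<^esub> m') \<oplus>\<^bsub>M\<^esub> (r' \<odot>\<^bsub>M\<^esub> m))),
      one = (\<one>\<^bsub>R\<^esub>, \<zero>\<^bsub>M\<^esub>),
      zero = (\<zero>\<^bsub>R\<^esub>, \<zero>\<^bsub>M\<^esub>),
      add = (\<lambda>(r, m) (r', m'). (r \<oplus>\<^bsub>R\<^esub> r', m \<oplus>\<^bsub>M\<^esub> m')) \<rparr>"

end

theory Submission
  imports Defs "HOL-Algebra.QuotRing"
begin


lemma prime_pow_mem:
  assumes "primeideal p A" "x \<in> carrier A" "x [^]\<^bsub>A\<^esub> (n::nat) \<in> p"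
  shows "x \<in> p"
  using assms(3)
proof (induction n)
  case 0
  interpret primeideal p A by fact
  show ?case using 0 I_notcarr one_imp_carrier by simp
next
  case (Suc n)
  interpret primeideal p A by fact
  have "x [^]\<^bsub>A\<^esub> n \<otimes>\<^bsub>A\<^esub> x \<in> p" using Suc.prems by simp
  then have "x [^]\<^bsub>A\<^esub> n \<in> p \<or> x \<in> p" using I_prime assms(2) by simp
  then show ?case using Suc.IH by blast
qed

lemma image_ideal:
  assumes A: "ring A" and B: "ring B" and h: "h \<in> ring_hom A B"
    and surj: "h ` carrier A = carrier B" and I: "ideal I A"
  shows "ideal (h ` I) B"
proof -
  interpret A: ring A by fact
  interpret B: ring B by fact
  interpret I: ideal I A by fact
  interpret hh: ring_hom_ring A B h using A B h by (simp add: ring_hom_ringI2)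
  show ?thesis
  proof (rule idealI[OF B])
    show "subgroup (h ` I) (add_monoid B)"
    proof (rule B.add.subgroupI)
      show "h ` I \<subseteq> carrier B" using I.Icarr hh.hom_closed by auto
      show "h ` I \<noteq> {}" using I.zero_closed by blast
    next
      fix a b assume "a \<in> h ` I" "b \<in> h ` I"
      then obtain x y where "x \<in> I" "y \<in> I" "a = h x" "b = h y" by blast
      then show "a \<oplus>\<^bsub>B\<^esub> b \<in> h ` I"
        using I.Icarr
        by (auto intro!: image_eqI[where x="x \<oplus>\<^bsub>A\<^esub> y"])
    next
      fix a assume "a \<in> h ` I"
      then obtain x where "x \<in> I" "a = h x" by blast
      then show "\<ominus>\<^bsub>B\<^esub> a \<in> h ` I"
        using I.Icarr
        by (auto intro!: image_eqI[where x="\<ominus>\<^bsub>A\<^esub> x"])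
    qed
  next
    fix a x assume "a \<in> h ` I" "x \<in> carrier B"
    then obtain i y where "i \<in> I" "y \<in> carrier A" "a = h i" "x = h y" using surj by blast
    then show "x \<otimes>\<^bsub>B\<^esub> a \<in> h ` I" "a \<otimes>\<^bsub>B\<^esub> x \<in> h ` I"
      using I.Icarr I.I_l_closed I.I_r_closed
       apply -
      by (force intro!: image_eqI[where x="y \<otimes>\<^bsub>A\<^esub> i"])
        (force intro!: image_eqI[where x="i \<otimes>\<^bsub>A\<^esub> y"])
  qed
qed

lemma kernel_in_prime:
  assumes A: "cring A" and B: "cring B" and h: "h \<in> ring_hom A B"
    and nil: "\<And>x. x \<in> carrier A \<Longrightarrow> h x = \<zero>\<^bsub>B\<^esub> \<Longrightarrow> \<exists>n::nat. x [^]\<^bsub>A\<^esub> n = \<zero>\<^bsub>A\<^esub>"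
    and p: "primeideal p A" and a: "a \<in> carrier A" and ha: "h a \<in> h ` p"
  shows "a \<in> p"
proof -
  interpret A: cring A by fact
  interpret B: cring B by fact
  interpret P: primeideal p A by fact
  interpret hh: ring_hom_ring A B h using A.ring_axioms B.ring_axioms h by (simp add: ring_hom_ringI2)
  obtain b where b: "b \<in> p" "h a = h b" using ha by blast
  have bc: "b \<in> carrier A" using b P.Icarr by blast
  have "h (a \<ominus>\<^bsub>A\<^esub> b) = h a \<ominus>\<^bsub>B\<^esub> h b" using a bc by (simp add: A.minus_eq B.minus_eq)
  also have "\<dots> = \<zero>\<^bsub>B\<^esub>" using b(2) a bc by (simp add: B.r_neg B.minus_eq)
  finally have "h (a \<ominus>\<^bsub>A\<^esub> b) = \<zero>\<^bsub>B\<^esub>" .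
  then obtain n where "(a \<ominus>\<^bsub>A\<^esub> b) [^]\<^bsub>A\<^esub> (n::nat) = \<zero>\<^bsub>A\<^esub>" using nil a bc by blast
  then have "(a \<ominus>\<^bsub>A\<^esub> b) [^]\<^bsub>A\<^esub> n \<in> p" by simp
  then have "a \<ominus>\<^bsub>A\<^esub> b \<in> p" using prime_pow_mem[OF p] a bc by blast
  then have "(a \<ominus>\<^bsub>A\<^esub> b) \<oplus>\<^bsub>A\<^esub> b \<in> p" using b by simp
  moreover have "(a \<ominus>\<^bsub>A\<^esub> b) \<oplus>\<^bsub>A\<^esub> b = a" using a bc by algebra
  ultimately show ?thesis by simp
qed

lemma cp_transfer:
  assumes A: "cring A" and B: "cring B" and h: "h \<in> ring_hom A B"
    and surj: "h ` carrier A = carrier B"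
    and nil: "\<And>x. x \<in> carrier A \<Longrightarrow> h x = \<zero>\<^bsub>B\<^esub> \<Longrightarrow> \<exists>n::nat. x [^]\<^bsub>A\<^esub> n = \<zero>\<^bsub>A\<^esub>"
  shows "compactly_packed A \<longleftrightarrow> compactly_packed B"
proof -
  interpret A: cring A by fact
  interpret B: cring B by fact
  interpret hh: ring_hom_ring A B h using A.ring_axioms B.ring_axioms h by (simp add: ring_hom_ringI2)
  have bk: "\<And>p a. primeideal p A \<Longrightarrow> a \<in> carrier A \<Longrightarrow> h a \<in> h ` p \<Longrightarrow> a \<in> p"
    using kernel_in_prime[OF A B h nil] by blast
  have imprime: "primeideal (h ` p) B" if p: "primeideal p A" for p
  proof -
    interpret P: primeideal p A by fact
    show ?thesis
    proof (rule primeidealI)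
      show "ideal (h ` p) B" by (rule image_ideal[OF A.ring_axioms B.ring_axioms h surj P.is_ideal])
      show "cring B" by fact
      show "carrier B \<noteq> h ` p"
      proof
        assume "carrier B = h ` p"
        then have "h \<one>\<^bsub>A\<^esub> \<in> h ` p" using B.one_closed hh.hom_one by metis
        then have "\<one>\<^bsub>A\<^esub> \<in> p" using bk[OF p] by simp
        then show False using P.I_notcarr P.one_imp_carrier by simp
      qed
      fix a b assume "a \<in> carrier B" "b \<in> carrier B" "a \<otimes>\<^bsub>B\<^esub> b \<in> h ` p"
      then obtain x y where xy: "x \<in> carrier A" "y \<in> carrier A" "a = h x" "b = h y"
        using surj by blast
      then have "h (x \<otimes>\<^bsub>A\<^esub> y) \<in> h ` p" using \<open>a \<otimes>\<^bsub>B\<^esub> b \<in> h ` p\<close> by simp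
      then have "x \<otimes>\<^bsub>A\<^esub> y \<in> p" using bk[OF p] xy by simp
      then have "x \<in> p \<or> y \<in> p" using P.I_prime xy by simp
      then show "a \<in> h ` p \<or> b \<in> h ` p" using xy by blast
    qed
  qed
  show ?thesis
  proof
    assume cpA: "compactly_packed A"
    show "compactly_packed B"
      unfolding compactly_packed_def
    proof (intro allI impI)
      fix I Q assume asm: "ideal I B \<and> (\<forall>q\<in>Q. primeideal q B) \<and> I \<subseteq> \<Union> Q"
      let ?I = "{r \<in> carrier A. h r \<in> I}"
      let ?P = "(\<lambda>q. {r \<in> carrier A. h r \<in> q}) ` Q"
      have "ideal ?I A" using hh.ideal_vimage asm by blast
      moreover have "\<forall>p\<in>?P. primeideal p A" using hh.primeideal_vimage[OF A] asm by blast
      moreover have "?I \<subseteq> \<Union> ?P" using asm by blast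
      ultimately obtain p where "p \<in> ?P" "?I \<subseteq> p" using cpA unfolding compactly_packed_def
        by meson
      then obtain q where q: "q \<in> Q" "{r \<in> carrier A. h r \<in> I} \<subseteq> {r \<in> carrier A. h r \<in> q}" by blast
      have "I \<subseteq> q"
      proof
        fix y assume "y \<in> I"
        moreover have "y \<in> carrier B" using asm \<open>y \<in> I\<close> ideal.Icarr by metis
        moreover obtain x where "x \<in> carrier A" "y = h x" using surj \<open>y \<in> carrier B\<close> by (metis imageE)
        ultimately have "x \<in> carrier A" "h x \<in> I" "y = h x" by auto
        then show "y \<in> q" using q by blast
      qed
      then show "\<exists>q\<in>Q. I \<subseteq> q" using q by blast
    qed
  next
    assume cpB: "compactly_packed B"
    show "compactly_packed A"
      unfolding compactly_packed_def
    proof (intro allI impI)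
      fix I P assume asm: "ideal I A \<and> (\<forall>p\<in>P. primeideal p A) \<and> I \<subseteq> \<Union> P"
      have "ideal (h ` I) B" using image_ideal[OF A.ring_axioms B.ring_axioms h surj] asm by blast
      moreover have "\<forall>q\<in>(`) h ` P. primeideal q B" using imprime asm by blast
      moreover have "h ` I \<subseteq> \<Union> ((`) h ` P)" using asm by blast
      ultimately obtain q where "q \<in> (`) h ` P" "h ` I \<subseteq> q" using cpB unfolding compactly_packed_def
        by meson
      then obtain p where p: "p \<in> P" "h ` I \<subseteq> h ` p" by blast
      have "I \<subseteq> p"
      proof
        fix x assume "x \<in> I"
        then have "x \<in> carrier A" using asm ideal.Icarr by metis
        then show "x \<in> p" using bk[of p x] p asm \<open>x \<in> I\<close> by blast
      qed
      then show "\<exists>p\<in>P. I \<subseteq> p" using p by blast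
    qed
  qed
qed



context
  fixes R :: "('a, 'c) ring_scheme" and M :: "('a, 'e, 'g) module_scheme"
  assumes mod: "module R M"
begin

interpretation module R M by (rule mod)

abbreviation "T \<equiv> trivial_extension R M"

lemma te_carrier[simp]: "carrier T = carrier R \<times> carrier M"
  and te_mult[simp]: "(r, m) \<otimes>\<^bsub>T\<^esub> (r', m') = (r \<otimes>\<^bsub>R\<^esub> r', (r \<odot>\<^bsub>M\<^esub> m') \<oplus>\<^bsub>M\<^esub> (r' \<odot>\<^bsub>M\<^esub> m))"
  and te_add[simp]: "(r, m) \<oplus>\<^bsub>T\<^esub> (r', m') = (r \<oplus>\<^bsub>R\<^esub> r', m \<oplus>\<^bsub>M\<^esub> m')"
  and te_one[simp]: "\<one>\<^bsub>T\<^esub> = (\<one>\<^bsub>R\<^esub>, \<zero>\<^bsub>M\<^esub>)"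
  and te_zero[simp]: "\<zero>\<^bsub>T\<^esub> = (\<zero>\<^bsub>R\<^esub>, \<zero>\<^bsub>M\<^esub>)"
  by (simp_all add: trivial_extension_def)

lemma te_cring: "cring T"
proof (rule cringI)
  show "abelian_group T"
  proof (rule abelian_groupI)
    fix x y z assume "x \<in> carrier T" "y \<in> carrier T" "z \<in> carrier T"
    then show "x \<oplus>\<^bsub>T\<^esub> y \<in> carrier T" "(x \<oplus>\<^bsub>T\<^esub> y) \<oplus>\<^bsub>T\<^esub> z = x \<oplus>\<^bsub>T\<^esub> (y \<oplus>\<^bsub>T\<^esub> z)"
      "x \<oplus>\<^bsub>T\<^esub> y = y \<oplus>\<^bsub>T\<^esub> x" "\<zero>\<^bsub>T\<^esub> \<oplus>\<^bsub>T\<^esub> x = x"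
      by (auto simp: R.a_ac M.a_ac)
    show "\<exists>y\<in>carrier T. y \<oplus>\<^bsub>T\<^esub> x = \<zero>\<^bsub>T\<^esub>"
      using \<open>x \<in> carrier T\<close>
      by (auto intro!: bexI[where x="(\<ominus>\<^bsub>R\<^esub> fst x, \<ominus>\<^bsub>M\<^esub> snd x)"] simp: R.l_neg M.l_neg)
  next
    show "\<zero>\<^bsub>T\<^esub> \<in> carrier T" by simp
  qed
next
  show "comm_monoid T"
  proof (rule comm_monoidI)
    fix x y z assume "x \<in> carrier T" "y \<in> carrier T" "z \<in> carrier T"
    then obtain a m b n c k where xyz: "x = (a, m)" "y = (b, n)" "z = (c, k)"
      "a \<in> carrier R" "b \<in> carrier R" "c \<in> carrier R" "m \<in> carrier M" "n \<in> carrier M" "k \<in> carrier M"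
      by auto
    then show "x \<otimes>\<^bsub>T\<^esub> y \<in> carrier T" by simp
    show "x \<otimes>\<^bsub>T\<^esub> y = y \<otimes>\<^bsub>T\<^esub> x" using xyz by (simp add: R.m_comm M.a_comm)
    show "\<one>\<^bsub>T\<^esub> \<otimes>\<^bsub>T\<^esub> x = x" using xyz by simp
    show "x \<otimes>\<^bsub>T\<^esub> y \<otimes>\<^bsub>T\<^esub> z = x \<otimes>\<^bsub>T\<^esub> (y \<otimes>\<^bsub>T\<^esub> z)" using xyz
      by (simp add: R.m_assoc smult_r_distr smult_assoc1 M.a_ac, simp add: R.m_comm smult_assoc1[symmetric])
  next
    show "\<one>\<^bsub>T\<^esub> \<in> carrier T" by simp
  qed
next
  fix x y z assume "x \<in> carrier T" "y \<in> carrier T" "z \<in> carrier T"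
  then obtain a m b n c k where xyz: "x = (a, m)" "y = (b, n)" "z = (c, k)"
    "a \<in> carrier R" "b \<in> carrier R" "c \<in> carrier R" "m \<in> carrier M" "n \<in> carrier M" "k \<in> carrier M"
    by auto
  then show "(x \<oplus>\<^bsub>T\<^esub> y) \<otimes>\<^bsub>T\<^esub> z = x \<otimes>\<^bsub>T\<^esub> z \<oplus>\<^bsub>T\<^esub> y \<otimes>\<^bsub>T\<^esub> z"
    by (simp add: R.l_distr smult_l_distr smult_r_distr M.a_ac)
qed

lemma te_cp: "compactly_packed T \<longleftrightarrow> compactly_packed R"
proof (rule cp_transfer[OF te_cring R.is_cring])
  show "fst \<in> ring_hom T R"
    by (rule ring_hom_memI) auto
  show "fst ` carrier T = carrier R"
    by (auto intro!: image_eqI[where x="(r, \<zero>\<^bsub>M\<^esub>)" for r])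
  fix x assume "x \<in> carrier T" "fst x = \<zero>\<^bsub>R\<^esub>"
  then obtain m where "x = (\<zero>\<^bsub>R\<^esub>, m)" "m \<in> carrier M" by auto
  then have "x [^]\<^bsub>T\<^esub> (2::nat) = \<zero>\<^bsub>T\<^esub>" by (simp add: numeral_2_eq_2)
  then show "\<exists>n::nat. x [^]\<^bsub>T\<^esub> n = \<zero>\<^bsub>T\<^esub>" by blast
qed

end

context
  fixes R :: "('a, 'c) ring_scheme" and S :: "('b, 'd) ring_scheme"
    and f :: "'a \<Rightarrow> 'b" and J :: "'b set"
  assumes cR: "cring R" and cS: "cring S" and fh: "f \<in> ring_hom R S"
    and iJ: "ideal J S" and nJ: "J \<subseteq> nilradical S"
begin

interpretation R: cring R by (rule cR)
interpretation S: cring S by (rule cS)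
interpretation J: ideal J S by (rule iJ)
interpretation F: ring_hom_ring R S f using cR cS fh by (simp add: ring_hom_ringI2 cring.axioms(1))

abbreviation "A \<equiv> amalgamation R S f J"

lemma am_carrier: "x \<in> carrier A \<longleftrightarrow> fst x \<in> carrier R \<and> (\<exists>j\<in>J. snd x = f (fst x) \<oplus>\<^bsub>S\<^esub> j)"
  by (cases x) (auto simp: amalgamation_def)

lemma am_mult[simp]: "(r, m) \<otimes>\<^bsub>A\<^esub> (r', m') = (r \<otimes>\<^bsub>R\<^esub> r', m \<otimes>\<^bsub>S\<^esub> m')"
  and am_add[simp]: "(r, m) \<oplus>\<^bsub>A\<^esub> (r', m') = (r \<oplus>\<^bsub>R\<^esub> r', m \<oplus>\<^bsub>S\<^esub> m')"
  and am_one[simp]: "\<one>\<^bsub>A\<^esub> = (\<one>\<^bsub>R\<^esub>, \<one>\<^bsub>S\<^esub>)"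
  and am_zero[simp]: "\<zero>\<^bsub>A\<^esub> = (\<zero>\<^bsub>R\<^esub>, \<zero>\<^bsub>S\<^esub>)"
  by (simp_all add: amalgamation_def)

lemma am_elem:
  assumes "x \<in> carrier A"
  obtains r j where "x = (r, f r \<oplus>\<^bsub>S\<^esub> j)" "r \<in> carrier R" "j \<in> J" "j \<in> carrier S"
  using assms J.Icarr unfolding am_carrier by (cases x) auto

lemma am_in: "r \<in> carrier R \<Longrightarrow> j \<in> J \<Longrightarrow> s = f r \<oplus>\<^bsub>S\<^esub> j \<Longrightarrow> (r, s) \<in> carrier A"
  unfolding am_carrier by auto

lemma am_cring: "cring A"
proof (rule cringI)
  show "abelian_group A"
  proof (rule abelian_groupI)
    fix x y z assume x: "x \<in> carrier A" and y: "y \<in> carrier A" and z: "z \<in> carrier A"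
    obtain a i where a: "x = (a, f a \<oplus>\<^bsub>S\<^esub> i)" "a \<in> carrier R" "i \<in> J" "i \<in> carrier S" using am_elem[OF x] .
    obtain b j where b: "y = (b, f b \<oplus>\<^bsub>S\<^esub> j)" "b \<in> carrier R" "j \<in> J" "j \<in> carrier S" using am_elem[OF y] .
    obtain c k where c: "z = (c, f c \<oplus>\<^bsub>S\<^esub> k)" "c \<in> carrier R" "k \<in> J" "k \<in> carrier S" using am_elem[OF z] .
    show "x \<oplus>\<^bsub>A\<^esub> y \<in> carrier A"
    proof -
      have eq: "(f a \<oplus>\<^bsub>S\<^esub> i) \<oplus>\<^bsub>S\<^esub> (f b \<oplus>\<^bsub>S\<^esub> j) = f (a \<oplus>\<^bsub>R\<^esub> b) \<oplus>\<^bsub>S\<^esub> (i \<oplus>\<^bsub>S\<^esub> j)"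
        using a b by (simp add: S.a_ac)
      show ?thesis unfolding a(1) b(1) am_add
        by (rule am_in[of "a \<oplus>\<^bsub>R\<^esub> b" "i \<oplus>\<^bsub>S\<^esub> j", OF _ _ eq]) (use a b in simp_all)
    qed
    show "(x \<oplus>\<^bsub>A\<^esub> y) \<oplus>\<^bsub>A\<^esub> z = x \<oplus>\<^bsub>A\<^esub> (y \<oplus>\<^bsub>A\<^esub> z)"
      "x \<oplus>\<^bsub>A\<^esub> y = y \<oplus>\<^bsub>A\<^esub> x" "\<zero>\<^bsub>A\<^esub> \<oplus>\<^bsub>A\<^esub> x = x"
      using a b c by (simp_all add: R.a_ac S.a_ac)
    show "\<exists>y\<in>carrier A. y \<oplus>\<^bsub>A\<^esub> x = \<zero>\<^bsub>A\<^esub>"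
    proof (rule bexI[where x="(\<ominus>\<^bsub>R\<^esub> a, \<ominus>\<^bsub>S\<^esub> (f a \<oplus>\<^bsub>S\<^esub> i))"])
      show "(\<ominus>\<^bsub>R\<^esub> a, \<ominus>\<^bsub>S\<^esub> (f a \<oplus>\<^bsub>S\<^esub> i)) \<oplus>\<^bsub>A\<^esub> x = \<zero>\<^bsub>A\<^esub>"
        using a by (simp add: R.l_neg S.l_neg)
      have eqn: "\<ominus>\<^bsub>S\<^esub> (f a \<oplus>\<^bsub>S\<^esub> i) = f (\<ominus>\<^bsub>R\<^esub> a) \<oplus>\<^bsub>S\<^esub> (\<ominus>\<^bsub>S\<^esub> i)"
        using a by (simp add: F.hom_a_inv S.minus_add)
      show "(\<ominus>\<^bsub>R\<^esub> a, \<ominus>\<^bsub>S\<^esub> (f a \<oplus>\<^bsub>S\<^esub> i)) \<in> carrier A"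
        by (rule am_in[of "\<ominus>\<^bsub>R\<^esub> a" "\<ominus>\<^bsub>S\<^esub> i", OF _ _ eqn]) (use a in simp_all)
    qed
  next
    show "\<zero>\<^bsub>A\<^esub> \<in> carrier A" unfolding am_zero by (rule am_in[where j="\<zero>\<^bsub>S\<^esub>"]) auto
  qed
next
  show "comm_monoid A"
  proof (rule comm_monoidI)
    fix x y z assume x: "x \<in> carrier A" and y: "y \<in> carrier A" and z: "z \<in> carrier A"
    obtain a i where a: "x = (a, f a \<oplus>\<^bsub>S\<^esub> i)" "a \<in> carrier R" "i \<in> J" "i \<in> carrier S" using am_elem[OF x] .
    obtain b j where b: "y = (b, f b \<oplus>\<^bsub>S\<^esub> j)" "b \<in> carrier R" "j \<in> J" "j \<in> carrier S" using am_elem[OF y] .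
    obtain c k where c: "z = (c, f c \<oplus>\<^bsub>S\<^esub> k)" "c \<in> carrier R" "k \<in> J" "k \<in> carrier S" using am_elem[OF z] .
    show "x \<otimes>\<^bsub>A\<^esub> y \<in> carrier A"
    proof -
      let ?j = "f a \<otimes>\<^bsub>S\<^esub> j \<oplus>\<^bsub>S\<^esub> i \<otimes>\<^bsub>S\<^esub> f b \<oplus>\<^bsub>S\<^esub> i \<otimes>\<^bsub>S\<^esub> j"
      have "(f a \<oplus>\<^bsub>S\<^esub> i) \<otimes>\<^bsub>S\<^esub> (f b \<oplus>\<^bsub>S\<^esub> j) = f a \<otimes>\<^bsub>S\<^esub> f b \<oplus>\<^bsub>S\<^esub> ?j"
        using a b by (simp add: S.l_distr S.r_distr S.a_ac)
      moreover have "?j \<in> J" using a b by (simp add: J.I_l_closed J.I_r_closed)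
      ultimately show ?thesis unfolding a(1) b(1) am_mult
        by (intro am_in[of "a \<otimes>\<^bsub>R\<^esub> b" ?j]) (use a b in simp_all)
    qed
    show "x \<otimes>\<^bsub>A\<^esub> y = y \<otimes>\<^bsub>A\<^esub> x" "\<one>\<^bsub>A\<^esub> \<otimes>\<^bsub>A\<^esub> x = x"
      "x \<otimes>\<^bsub>A\<^esub> y \<otimes>\<^bsub>A\<^esub> z = x \<otimes>\<^bsub>A\<^esub> (y \<otimes>\<^bsub>A\<^esub> z)"
      using a b c by (simp_all add: R.m_ac S.m_ac)
  next
    show "\<one>\<^bsub>A\<^esub> \<in> carrier A" unfolding am_one by (rule am_in[where j="\<zero>\<^bsub>S\<^esub>"]) auto
  qed
next
  fix x y z assume x: "x \<in> carrier A" and y: "y \<in> carrier A" and z: "z \<in> carrier A"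
  obtain a i where a: "x = (a, f a \<oplus>\<^bsub>S\<^esub> i)" "a \<in> carrier R" "i \<in> J" "i \<in> carrier S" using am_elem[OF x] .
  obtain b j where b: "y = (b, f b \<oplus>\<^bsub>S\<^esub> j)" "b \<in> carrier R" "j \<in> J" "j \<in> carrier S" using am_elem[OF y] .
  obtain c k where c: "z = (c, f c \<oplus>\<^bsub>S\<^esub> k)" "c \<in> carrier R" "k \<in> J" "k \<in> carrier S" using am_elem[OF z] .
  show "(x \<oplus>\<^bsub>A\<^esub> y) \<otimes>\<^bsub>A\<^esub> z = x \<otimes>\<^bsub>A\<^esub> z \<oplus>\<^bsub>A\<^esub> y \<otimes>\<^bsub>A\<^esub> z"
    using a b c by (simp add: R.l_distr S.l_distr)
qed

lemma am_mult': "x \<otimes>\<^bsub>A\<^esub> y = (fst x \<otimes>\<^bsub>R\<^esub> fst y, snd x \<otimes>\<^bsub>S\<^esub> snd y)"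
  by (simp add: amalgamation_def case_prod_beta)

lemma am_pow: "x [^]\<^bsub>A\<^esub> (n::nat) = (fst x [^]\<^bsub>R\<^esub> n, snd x [^]\<^bsub>S\<^esub> n)"
  by (induction n) (auto simp: am_mult')

lemma am_cp: "compactly_packed A \<longleftrightarrow> compactly_packed R"
proof (rule cp_transfer[OF am_cring cR])
  show "fst \<in> ring_hom A R"
    by (rule ring_hom_memI) (auto simp: am_carrier)
  show "fst ` carrier A = carrier R"
    by (force intro!: image_eqI[where x="(r, f r \<oplus>\<^bsub>S\<^esub> \<zero>\<^bsub>S\<^esub>)" for r] simp: am_carrier)
  fix x assume x: "x \<in> carrier A" "fst x = \<zero>\<^bsub>R\<^esub>"
  obtain a i where a: "x = (a, f a \<oplus>\<^bsub>S\<^esub> i)" "a \<in> carrier R" "i \<in> J" "i \<in> carrier S" using am_elem[OF x(1)] .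
  have xx: "x = (\<zero>\<^bsub>R\<^esub>, i)" using a x(2) by simp
  obtain n where "i [^]\<^bsub>S\<^esub> (n::nat) = \<zero>\<^bsub>S\<^esub>" using nJ a(3) unfolding nilradical_def by blast
  then have "i [^]\<^bsub>S\<^esub> Suc n = \<zero>\<^bsub>S\<^esub>" using a by simp
  moreover have "\<zero>\<^bsub>R\<^esub> [^]\<^bsub>R\<^esub> Suc n = \<zero>\<^bsub>R\<^esub>" by simp
  ultimately have "x [^]\<^bsub>A\<^esub> Suc n = \<zero>\<^bsub>A\<^esub>" unfolding am_pow xx by simp
  then show "\<exists>n::nat. x [^]\<^bsub>A\<^esub> n = \<zero>\<^bsub>A\<^esub>" by blast
qed

end

theorem corollary4p4:
  fixes R :: "('a, 'c) ring_scheme" and S :: "('b, 'd) ring_scheme"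
    and f :: "'a \<Rightarrow> 'b" and J :: "'b set"
  assumes "cring R" and "cring S" and "f \<in> ring_hom R S"
    and "ideal J S" and "J \<noteq> {\<zero>\<^bsub>S\<^esub>}" and "J \<noteq> carrier S"
  shows "(J \<subseteq> nilradical S \<longrightarrow>
            (compactly_packed (amalgamation R S f J) \<longleftrightarrow> compactly_packed R))
       \<and> (\<forall>M :: ('a, 'e, 'g) module_scheme. module R M \<longrightarrow>
            (compactly_packed (trivial_extension R M) \<longleftrightarrow> compactly_packed R))"
proof (intro conjI impI allI)
  assume "J \<subseteq> nilradical S"
  then show "compactly_packed (amalgamation R S f J) \<longleftrightarrow> compactly_packed R"
    using am_cp[OF assms(1-4)] by blast
next
  fix M :: "('a, 'e, 'g) module_scheme"
  assume "module R M"
  then show "compactly_packed (trivial_extension R M) \<longleftrightarrow> compactly_packed R"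
    by (rule te_cp)
qed

end
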